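(* Let $\varphi$ be an Orlicz $N$-function with Young–Fenchel transform $\psi$ and let $q_\varphi$ be the generalized inverse of the density of $\varphi$. Let $\{X_{k,n},k,n\ge1\}$ be a double array of independent $\varphi$-subgaussian random variables with $\tau_\varphi(X_{k,n})=1$ for all $k,n$, and set $Y_{m,j}=\max_{1\le k\le m,1\le n\le j}X_{k,n}-\psi^{-1}(\ln(mj))$, $Y^+_{m,j}=\max(Y_{m,j},0)$. Assume: (i) there is a strictly increasing function $\kappa:\mathbb R^+\to\mathbb R^+$ and a constant $C>0$ such that $P(X_{k,n}>x)\ge C\exp(-\kappa(x))$ for all $k,n\ge1$ and $x>0$; (ii) there exist $x_0>0$ and $B,C_1>0$ such that $\exp(-\kappa(x))\ge C_1\exp(-B\psi(x))$ for all $x\ge x_0$; (iii) for some $\varepsilon>0$, $\sup_{x>x_0}\frac{q_\varphi(x+\varepsilon)}{\psi(x)}\le C_2<+\infty$. Then for every $\alpha<2-B(1+C_2\varepsilon)$, $$\sum_{m=1}^\infty\sum_{j=1}^\infty(mj)^{-\alpha}P(Y^+_{m,j}>\varepsilon)=+\infty.$$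
   Context: An Orlicz $N$-function is a continuous even convex function $\varphi:\mathbb R\to\mathbb R$ with $\varphi(0)=0$, increasing on $(0,\infty)$, with $\varphi(x)/x\to0$ as $x\to0$ and $\varphi(x)/x\to+\infty$ as $x\to+\infty$. It can be written $\varphi(x)=\int_0^{|x|}p_\varphi(t)\,dt$ with non-decreasing density $p_\varphi$; its generalized inverse is $q_\varphi(t)=\sup\{u\ge0:p_\varphi(u)\le t\}$. The Young–Fenchel transform is $\psi(x)=\sup_{y\in\mathbb R}(xy-\varphi(y))$, with $\psi(x)=\int_0^{|x|}q_\varphi(t)dt$; $\psi^{-1}$ is the inverse of $\psi$ on $[0,\infty)$. A random variable $X$ is $\varphi$-subgaussian if $EX=0$ and there is a finite $a>0$ with $E\exp(tX)\le\exp(\varphi(at))$ for all $t$; $\tau_\varphi(X)=\inf\{a>0:E\exp(tX)\le\exp(\varphi(at))\ \forall t\}$. *)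

theory Defs
  imports "HOL-Probability.Probability"
begin

definition orlicz_N :: "(real \<Rightarrow> real) \<Rightarrow> bool" where
  "orlicz_N \<phi> \<longleftrightarrow>
     continuous_on UNIV \<phi> \<and> convex_on UNIV \<phi> \<and> (\<forall>x. \<phi> (-x) = \<phi> x) \<and> \<phi> 0 = 0 \<and>
     strict_mono_on {0<..} \<phi> \<and>
     ((\<lambda>x. \<phi> x / x) \<longlongrightarrow> 0) (at 0) \<and>
     filterlim (\<lambda>x. \<phi> x / x) at_top at_top"

definition is_orlicz_density :: "(real \<Rightarrow> real) \<Rightarrow> (real \<Rightarrow> real) \<Rightarrow> bool" where
  "is_orlicz_density \<phi> p \<longleftrightarrow>
     mono_on {0..} p \<and> (\<forall>x. p integrable_on {0..\<bar>x\<bar>} \<and> \<phi> x = integral {0..\<bar>x\<bar>} p)"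

definition gen_inv :: "(real \<Rightarrow> real) \<Rightarrow> real \<Rightarrow> real" where
  "gen_inv p t = Sup {u. u \<ge> 0 \<and> p u \<le> t}"

definition young_fenchel :: "(real \<Rightarrow> real) \<Rightarrow> real \<Rightarrow> real" where
  "young_fenchel \<phi> x = (SUP y. x * y - \<phi> y)"

definition inv_pos :: "(real \<Rightarrow> real) \<Rightarrow> real \<Rightarrow> real" where
  "inv_pos \<psi> v = (THE u. u \<ge> 0 \<and> \<psi> u = v)"

definition subg_bound :: "'a measure \<Rightarrow> (real \<Rightarrow> real) \<Rightarrow> ('a \<Rightarrow> real) \<Rightarrow> real \<Rightarrow> bool" where
  "subg_bound M \<phi> X a \<longleftrightarrow>
     (\<forall>t. integrable M (\<lambda>\<omega>. exp (t * X \<omega>)) \<and>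
          (\<integral>\<omega>. exp (t * X \<omega>) \<partial>M) \<le> exp (\<phi> (a * t)))"

definition phi_subgaussian :: "'a measure \<Rightarrow> (real \<Rightarrow> real) \<Rightarrow> ('a \<Rightarrow> real) \<Rightarrow> bool" where
  "phi_subgaussian M \<phi> X \<longleftrightarrow>
     integrable M X \<and> (\<integral>\<omega>. X \<omega> \<partial>M) = 0 \<and> (\<exists>a>0. subg_bound M \<phi> X a)"

definition tau_phi :: "'a measure \<Rightarrow> (real \<Rightarrow> real) \<Rightarrow> ('a \<Rightarrow> real) \<Rightarrow> real" where
  "tau_phi M \<phi> X = Inf {a. a > 0 \<and> subg_bound M \<phi> X a}"

end

theory Submission
  imports Defs
begin


lemma phi_nonneg:
  assumes "orlicz_N \<phi>" shows "\<phi> x \<ge> 0"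
proof -
  have cv: "convex_on UNIV \<phi>" and ev: "\<phi> (-x) = \<phi> x" and z: "\<phi> 0 = 0"
    using assms unfolding orlicz_N_def by auto
  have "\<phi> ((1 - 1/2) *\<^sub>R x + (1/2) *\<^sub>R (-x)) \<le> (1 - 1/2) * \<phi> x + (1/2) * \<phi> (-x)"
    by (rule convex_onD[OF cv]) auto
  then show ?thesis using ev z by simp
qed

lemma psi_bdd:
  assumes "orlicz_N \<phi>" shows "bdd_above (range (\<lambda>y. x*y - \<phi> y))"
proof -
  have lim: "filterlim (\<lambda>x. \<phi> x / x) at_top at_top" and ev: "\<And>x. \<phi> (-x) = \<phi> x"
    using assms unfolding orlicz_N_def by auto
  have "eventually (\<lambda>y. \<bar>x\<bar> + 1 \<le> \<phi> y / y) at_top"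
    using lim[unfolded filterlim_at_top, rule_format, of "\<bar>x\<bar> + 1"] by simp
  then obtain R where R: "\<And>y. y \<ge> R \<Longrightarrow> \<bar>x\<bar> + 1 \<le> \<phi> y / y"
    by (auto simp: eventually_at_top_linorder)
  define R' where "R' = max R 1"
  have "x*y - \<phi> y \<le> \<bar>x\<bar> * R'" for y
  proof (cases "\<bar>y\<bar> \<ge> R'")
    case True
    then have "\<bar>x\<bar> + 1 \<le> \<phi> \<bar>y\<bar> / \<bar>y\<bar>" using R R'_def by auto
    moreover have "\<bar>y\<bar> > 0" using True R'_def by auto
    ultimately have "(\<bar>x\<bar> + 1) * \<bar>y\<bar> \<le> \<phi> \<bar>y\<bar>" by (simp add: field_simps)
    moreover have "\<phi> \<bar>y\<bar> = \<phi> y" using ev by (cases "y \<ge> 0") auto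
    moreover have "x * y \<le> \<bar>x\<bar> * \<bar>y\<bar>" by (metis abs_ge_self abs_mult)
    moreover have "0 \<le> \<bar>x\<bar> * R'" using R'_def by auto
    moreover have "(\<bar>x\<bar> + 1) * \<bar>y\<bar> = \<bar>x\<bar> * \<bar>y\<bar> + \<bar>y\<bar>" by (simp add: distrib_right)
    ultimately show ?thesis by linarith
  next
    case False
    have "x * y \<le> \<bar>x\<bar> * \<bar>y\<bar>" by (metis abs_ge_self abs_mult)
    also have "\<dots> \<le> \<bar>x\<bar> * R'" using False by (intro mult_left_mono) auto
    finally show ?thesis using phi_nonneg[OF assms, of y] by linarith
  qed
  then show ?thesis by (intro bdd_aboveI2[where M="\<bar>x\<bar> * R'"])
qed

lemma psi_ge:
  assumes "orlicz_N \<phi>" shows "x*y - \<phi> y \<le> young_fenchel \<phi> x"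
  unfolding young_fenchel_def by (rule cSUP_upper[OF _ psi_bdd[OF assms]]) auto

lemma psi_le:
  assumes "\<And>y. x*y - \<phi> y \<le> K" shows "young_fenchel \<phi> x \<le> K"
  unfolding young_fenchel_def by (rule cSUP_least) (auto intro: assms)

lemma psi_0:
  assumes "orlicz_N \<phi>" shows "young_fenchel \<phi> 0 = 0"
proof (rule antisym)
  show "young_fenchel \<phi> 0 \<le> 0" by (rule psi_le) (use phi_nonneg[OF assms] in auto)
  show "0 \<le> young_fenchel \<phi> 0" using psi_ge[OF assms, of 0 0] assms by (simp add: orlicz_N_def)
qed

lemma psi_pos:
  assumes "orlicz_N \<phi>" "x > 0" shows "young_fenchel \<phi> x > 0"
proof -
  have lim: "((\<lambda>x. \<phi> x / x) \<longlongrightarrow> 0) (at 0)" using assms unfolding orlicz_N_def by auto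
  then have "((\<lambda>x. \<phi> x / x) \<longlongrightarrow> 0) (at_right 0)"
    using filterlim_at_split by blast
  then have "eventually (\<lambda>y. \<phi> y / y < x) (at_right 0)"
    using assms(2) order_tendstoD(2) by blast
  then obtain b where b: "b > 0" "\<And>y. 0 < y \<Longrightarrow> y < b \<Longrightarrow> \<phi> y / y < x"
    by (auto simp: eventually_at_right_field)
  have "\<phi> (b/2) / (b/2) < x" by (rule b(2)) (use b in auto)
  then have "\<phi> (b/2) < x * (b/2)" using b by (simp add: field_simps)
  then show ?thesis using psi_ge[OF assms(1), of x "b/2"] by linarith
qed

lemma psi_convex:
  assumes "orlicz_N \<phi>" shows "convex_on UNIV (young_fenchel \<phi>)"
proof (rule convex_onI)
  fix t x z :: real assume t: "0 < t" "t < 1"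
  show "young_fenchel \<phi> ((1 - t) *\<^sub>R x + t *\<^sub>R z) \<le> (1 - t) * young_fenchel \<phi> x + t * young_fenchel \<phi> z"
  proof (rule psi_le)
    fix y
    have "((1 - t) *\<^sub>R x + t *\<^sub>R z) * y - \<phi> y = (1-t) * (x*y - \<phi> y) + t * (z*y - \<phi> y)"
      by (simp add: algebra_simps)
    also have "\<dots> \<le> (1 - t) * young_fenchel \<phi> x + t * young_fenchel \<phi> z"
      using t psi_ge[OF assms, of x y] psi_ge[OF assms, of z y]
      by (intro add_mono mult_left_mono) auto
    finally show "((1 - t) *\<^sub>R x + t *\<^sub>R z) * y - \<phi> y \<le> \<dots>" .
  qed
qed auto

lemma psi_cont:
  assumes "orlicz_N \<phi>" shows "continuous_on UNIV (young_fenchel \<phi>)"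
  by (rule convex_on_continuous[OF _ psi_convex[OF assms]]) auto

lemma psi_strict:
  assumes "orlicz_N \<phi>" "0 \<le> a" "a < b" shows "young_fenchel \<phi> a < young_fenchel \<phi> b"
proof -
  let ?t = "a / b"
  have b: "b > 0" using assms by auto
  have "young_fenchel \<phi> ((1 - ?t) *\<^sub>R 0 + ?t *\<^sub>R b) \<le> (1 - ?t) * young_fenchel \<phi> 0 + ?t * young_fenchel \<phi> b"
    by (rule convex_onD[OF psi_convex[OF assms(1)]]) (use assms b in auto)
  then have "young_fenchel \<phi> a \<le> ?t * young_fenchel \<phi> b" using b psi_0[OF assms(1)] by simp
  moreover have "?t < 1" using assms b by auto
  moreover have "young_fenchel \<phi> b > 0" using psi_pos[OF assms(1) b] .
  ultimately have "?t * young_fenchel \<phi> b < 1 * young_fenchel \<phi> b"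
    by (intro mult_strict_right_mono) auto
  then show ?thesis using \<open>young_fenchel \<phi> a \<le> ?t * young_fenchel \<phi> b\<close> by simp
qed

lemma psi_unbdd:
  assumes "orlicz_N \<phi>" shows "young_fenchel \<phi> x \<ge> x - \<phi> 1"
  using psi_ge[OF assms, of x 1] by simp

lemma inv_pos_props:
  assumes "orlicz_N \<phi>" "L \<ge> 0"
  shows "inv_pos (young_fenchel \<phi>) L \<ge> 0 \<and> young_fenchel \<phi> (inv_pos (young_fenchel \<phi>) L) = L"
proof -
  let ?\<psi> = "young_fenchel \<phi>"
  have "\<exists>u. 0 \<le> u \<and> u \<le> L + \<phi> 1 + 1 \<and> ?\<psi> u = L"
  proof (rule IVT')
    show "?\<psi> 0 \<le> L" using psi_0[OF assms(1)] assms by simp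
    show "L \<le> ?\<psi> (L + \<phi> 1 + 1)" using psi_unbdd[OF assms(1), of "L + \<phi> 1 + 1"] by simp
    show "0 \<le> L + \<phi> 1 + 1" using assms phi_nonneg[OF assms(1), of 1] by simp
    show "continuous_on {0..L + \<phi> 1 + 1} ?\<psi>"
      by (rule continuous_on_subset[OF psi_cont[OF assms(1)]]) auto
  qed
  then obtain u where u: "u \<ge> 0" "?\<psi> u = L" by auto
  have uniq: "v = u" if "v \<ge> 0" "?\<psi> v = L" for v
  proof (rule ccontr)
    assume "v \<noteq> u"
    then consider "v < u" | "u < v" by linarith
    then show False
    proof cases
      case 1 then show False using psi_strict[OF assms(1) that(1) 1] u that by simp
    next
      case 2 then show False using psi_strict[OF assms(1) u(1) 2] u that by simp
    qed
  qed
  have "inv_pos ?\<psi> L = u" unfolding inv_pos_def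
  proof (rule the_equality)
    show "0 \<le> u \<and> ?\<psi> u = L" using u by simp
    fix v assume "0 \<le> v \<and> ?\<psi> v = L"
    then show "v = u" using uniq by blast
  qed
  then show ?thesis using u by simp
qed

lemma phi_int:
  assumes "is_orlicz_density \<phi> p" "0 \<le> x"
  shows "\<phi> x = integral {0..x} p" "p integrable_on {0..x}"
  using assms unfolding is_orlicz_density_def by (metis abs_of_nonneg)+

lemma phi_diff:
  assumes "is_orlicz_density \<phi> p" "0 \<le> a" "a \<le> b"
  shows "\<phi> b - \<phi> a = integral {a..b} p" "p integrable_on {a..b}"
proof -
  have ib: "p integrable_on {0..b}" using phi_int[OF assms(1)] assms by simp
  show "p integrable_on {a..b}" by (rule integrable_on_subinterval[OF ib]) (use assms in auto)
  have "integral {0..a} p + integral {a..b} p = integral {0..b} p"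
    by (rule Henstock_Kurzweil_Integration.integral_combine[OF assms(2,3) ib])
  then show "\<phi> b - \<phi> a = integral {a..b} p"
    using phi_int(1)[OF assms(1)] assms by (metis add_diff_cancel_left' order_trans)
qed

lemma phi_ge_lin:
  assumes "is_orlicz_density \<phi> p" "0 \<le> a" "a \<le> b" "\<And>t. a \<le> t \<Longrightarrow> t \<le> b \<Longrightarrow> c \<le> p t"
  shows "c * (b - a) \<le> \<phi> b - \<phi> a"
proof -
  have "integral {a..b} (\<lambda>_. c) \<le> integral {a..b} p"
    by (rule integral_le) (use phi_diff(2)[OF assms(1-3)] assms(4) in auto)
  then show ?thesis using phi_diff(1)[OF assms(1-3)] assms(3) by (simp add: mult.commute)
qed

lemma phi_le_lin:
  assumes "is_orlicz_density \<phi> p" "0 \<le> a" "a \<le> b" "\<And>t. a \<le> t \<Longrightarrow> t \<le> b \<Longrightarrow> p t \<le> c"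
  shows "\<phi> b - \<phi> a \<le> c * (b - a)"
proof -
  have "integral {a..b} p \<le> integral {a..b} (\<lambda>_. c)"
    by (rule integral_le) (use phi_diff(2)[OF assms(1-3)] assms(4) in auto)
  then show ?thesis using phi_diff(1)[OF assms(1-3)] assms(3) by (simp add: mult.commute)
qed

lemma p0_le:
  assumes "orlicz_N \<phi>" "is_orlicz_density \<phi> p"
  shows "p 0 \<le> 0"
proof -
  have mono: "mono_on {0..} p" using assms(2) unfolding is_orlicz_density_def by auto
  have z: "\<phi> 0 = 0" using assms(1) unfolding orlicz_N_def by auto
  have lim: "((\<lambda>x. \<phi> x / x) \<longlongrightarrow> 0) (at 0)" using assms(1) unfolding orlicz_N_def by auto
  then have lim': "((\<lambda>x. \<phi> x / x) \<longlongrightarrow> 0) (at_right 0)"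
    using filterlim_at_split by blast
  have "p 0 \<le> \<phi> x / x" if "x > 0" for x
  proof -
    have "p 0 * (x - 0) \<le> \<phi> x - \<phi> 0"
      by (rule phi_ge_lin[OF assms(2)]) (use that mono in \<open>auto intro: mono_onD\<close>)
    then show ?thesis using z that by (simp add: field_simps)
  qed
  then have "eventually (\<lambda>x. p 0 \<le> \<phi> x / x) (at_right 0)"
    by (auto simp: eventually_at_right_field intro: exI[of _ 1])
  then show ?thesis using tendsto_lowerbound[OF lim'] by simp
qed

lemma p_unbdd:
  assumes "orlicz_N \<phi>" "is_orlicz_density \<phi> p"
  shows "\<exists>x>0. p x > v"
proof -
  have mono: "mono_on {0..} p" using assms(2) unfolding is_orlicz_density_def by auto
  have z: "\<phi> 0 = 0" using assms(1) unfolding orlicz_N_def by auto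
  have lim: "filterlim (\<lambda>x. \<phi> x / x) at_top at_top" using assms(1) unfolding orlicz_N_def by auto
  have "eventually (\<lambda>y. v + 1 \<le> \<phi> y / y) at_top"
    using lim[unfolded filterlim_at_top, rule_format, of "v + 1"] by simp
  then obtain R where R: "\<And>y. y \<ge> R \<Longrightarrow> v + 1 \<le> \<phi> y / y"
    by (auto simp: eventually_at_top_linorder)
  define x where "x = max R 1"
  have x: "x > 0" "v + 1 \<le> \<phi> x / x" using R x_def by auto
  have "\<phi> x - \<phi> 0 \<le> p x * (x - 0)"
    by (rule phi_le_lin[OF assms(2)]) (use x mono in \<open>auto intro: mono_onD\<close>)
  then have "\<phi> x / x \<le> p x" using x z by (simp add: field_simps)
  then show ?thesis using x by (intro exI[of _ x]) auto
qed

lemma gen_inv_props: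
  assumes "orlicz_N \<phi>" "is_orlicz_density \<phi> p" "v \<ge> 0"
  shows "gen_inv p v \<ge> 0" "\<And>t. t > gen_inv p v \<Longrightarrow> p t > v"
proof -
  have mono: "mono_on {0..} p" using assms(2) unfolding is_orlicz_density_def by auto
  let ?S = "{u. u \<ge> 0 \<and> p u \<le> v}"
  have 0: "0 \<in> ?S" using p0_le[OF assms(1,2)] assms(3) by auto
  obtain x where x: "x > 0" "p x > v" using p_unbdd[OF assms(1,2)] by blast
  have "u \<le> x" if "u \<in> ?S" for u
  proof (rule ccontr)
    assume "\<not> u \<le> x"
    then have "p x \<le> p u" using x that by (intro mono_onD[OF mono]) auto
    then show False using that x by auto
  qed
  then have bdd: "bdd_above ?S" by (intro bdd_aboveI[where M=x]) blast
  show "gen_inv p v \<ge> 0" unfolding gen_inv_def by (rule cSup_upper[OF 0 bdd])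
  fix t assume t: "t > gen_inv p v"
  have "t \<notin> ?S"
  proof
    assume "t \<in> ?S"
    then have "t \<le> gen_inv p v" unfolding gen_inv_def by (rule cSup_upper[OF _ bdd])
    then show False using t by simp
  qed
  moreover have "t \<ge> 0" using t cSup_upper[OF 0 bdd] unfolding gen_inv_def by simp
  ultimately show "p t > v" by auto
qed

lemma psi_incr:
  assumes "orlicz_N \<phi>" "is_orlicz_density \<phi> p" "v \<ge> 0" "u \<le> v"
  shows "young_fenchel \<phi> v \<le> young_fenchel \<phi> u + (v - u) * gen_inv p v"
proof -
  let ?\<psi> = "young_fenchel \<phi>" and ?Y = "gen_inv p v"
  have Y0: "?Y \<ge> 0" and Yp: "\<And>t. t > ?Y \<Longrightarrow> p t > v" using gen_inv_props[OF assms(1-3)] by auto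
  have key: "?\<psi> v \<le> ?\<psi> u + (v - u) * Y'" if Y': "Y' > ?Y" for Y'
  proof (rule psi_le)
    have c1: "v * y - \<phi> y \<le> ?\<psi> u + (v - u) * Y'" if "y \<le> Y'" for y
    proof -
      have "v * y - \<phi> y = (u * y - \<phi> y) + (v - u) * y" by (simp add: algebra_simps)
      also have "\<dots> \<le> ?\<psi> u + (v - u) * Y'"
        using psi_ge[OF assms(1), of u y] that assms(4) by (intro add_mono mult_left_mono) auto
      finally show ?thesis .
    qed
    fix y
    show "v * y - \<phi> y \<le> ?\<psi> u + (v - u) * Y'"
    proof (cases "y \<le> Y'")
      case True then show ?thesis by (rule c1)
    next
      case False
      have "v * (y - Y') \<le> \<phi> y - \<phi> Y'"
        by (rule phi_ge_lin[OF assms(2)]) (use False Y' Y0 in \<open>auto intro!: less_imp_le[OF Yp]\<close>)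
      then have "v * y - \<phi> y \<le> v * Y' - \<phi> Y'" by (simp add: algebra_simps)
      also have "\<dots> \<le> ?\<psi> u + (v - u) * Y'" by (rule c1) simp
      finally show ?thesis .
    qed
  qed
  show ?thesis
  proof (rule ccontr)
    assume "\<not> ?thesis"
    then have gap: "?\<psi> v - ?\<psi> u - (v - u) * ?Y > 0" by simp
    show False
    proof (cases "v = u")
      case True then show False using key[of "?Y + 1"] gap by simp
    next
      case False
      then have vu: "v - u > 0" using assms(4) by simp
      define g where "g = ?\<psi> v - ?\<psi> u - (v - u) * ?Y"
      have g: "g > 0" using gap g_def by simp
      define Y' where "Y' = ?Y + g / (2 * (v - u))"
      have "Y' > ?Y" unfolding Y'_def using g vu by simp
      from key[OF this] have "?\<psi> v \<le> ?\<psi> u + (v - u) * Y'" .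
      also have "(v - u) * Y' = (v - u) * ?Y + g / 2"
        unfolding Y'_def using vu by (simp add: field_simps)
      finally show False using g g_def by linarith
    qed
  qed
qed

lemma phi_mono_abs:
  assumes "orlicz_N \<phi>" "\<bar>r\<bar> \<le> \<bar>s\<bar>" shows "\<phi> r \<le> \<phi> s"
proof -
  have ev: "\<And>x. \<phi> (-x) = \<phi> x" and z: "\<phi> 0 = 0" and sm: "strict_mono_on {0<..} \<phi>"
    using assms(1) unfolding orlicz_N_def by auto
  have a: "\<phi> \<bar>x\<bar> = \<phi> x" for x using ev[of x] by (cases "x \<ge> 0") auto
  have "\<phi> \<bar>r\<bar> \<le> \<phi> \<bar>s\<bar>"
  proof (cases "\<bar>r\<bar> = 0")
    case True then show ?thesis using z phi_nonneg[OF assms(1)] by simp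
  next
    case False
    show ?thesis
    proof (cases "\<bar>r\<bar> = \<bar>s\<bar>")
      case True then show ?thesis by simp
    next
      case False2: False
      then have "\<bar>r\<bar> < \<bar>s\<bar>" using assms(2) by simp
      then show ?thesis using False by (intro less_imp_le strict_mono_onD[OF sm]) auto
    qed
  qed
  then show ?thesis using a by simp
qed

lemma subg_one:
  assumes "orlicz_N \<phi>" "phi_subgaussian M \<phi> Xf" "tau_phi M \<phi> Xf = 1"
  shows "subg_bound M \<phi> Xf 1"
proof -
  let ?A = "{a. a > 0 \<and> subg_bound M \<phi> Xf a}"
  have ne: "?A \<noteq> {}" using assms(2) unfolding phi_subgaussian_def by auto
  have bdd: "bdd_below ?A" by (intro bdd_belowI[where m=0]) auto
  have inf: "Inf ?A = 1" using assms(3) unfolding tau_phi_def by simp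
  obtain a0 where a0: "a0 \<in> ?A" using ne by auto
  show ?thesis unfolding subg_bound_def
  proof
    fix t
    show "integrable M (\<lambda>\<omega>. exp (t * Xf \<omega>)) \<and> (\<integral>\<omega>. exp (t * Xf \<omega>) \<partial>M) \<le> exp (\<phi> (1 * t))"
    proof
      show "integrable M (\<lambda>\<omega>. exp (t * Xf \<omega>))" using a0 unfolding subg_bound_def by auto
      let ?E = "\<integral>\<omega>. exp (t * Xf \<omega>) \<partial>M"
      let ?f = "\<lambda>a. exp (\<phi> (a * t))"
      have ev: "eventually (\<lambda>a'. ?E \<le> ?f a') (at_right 1)"
        unfolding eventually_at_right_field
      proof (intro exI[of _ 2] conjI allI impI)
        show "(1::real) < 2" by simp
      next
        fix a' :: real assume "1 < a'" "a' < 2"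
        then have "Inf ?A < a'" using inf by simp
        then obtain a where a: "a \<in> ?A" "a < a'" using cInf_less_iff[OF ne bdd] by auto
        then have "?E \<le> exp (\<phi> (a * t))" unfolding subg_bound_def by auto
        also have "\<dots> \<le> ?f a'"
        proof -
          have "\<bar>a * t\<bar> \<le> \<bar>a' * t\<bar>" using a by (simp add: abs_mult mult_right_mono)
          then show ?thesis using phi_mono_abs[OF assms(1)] by simp
        qed
        finally show "?E \<le> ?f a'" .
      qed
      have cont: "continuous_on UNIV \<phi>" using assms(1) unfolding orlicz_N_def by auto
      have c: "\<And>x. isCont \<phi> x" using cont by (simp add: continuous_on_eq_continuous_at)
      have "isCont (\<lambda>a. \<phi> (a * t)) 1" by (rule isCont_o2[OF _ c]) (intro continuous_intros)
      then have "isCont ?f 1" by (intro continuous_intros)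
      then have "(?f \<longlongrightarrow> ?f 1) (at 1)" by (simp add: isCont_def)
      then have "(?f \<longlongrightarrow> ?f 1) (at_right 1)" using filterlim_at_split by blast
      from tendsto_lowerbound[OF this ev] show "?E \<le> exp (\<phi> (1 * t))" by simp
    qed
  qed
qed

lemma chernoff_psi:
  assumes "prob_space M" "orlicz_N \<phi>" "Xf \<in> borel_measurable M" "subg_bound M \<phi> Xf 1"
    and "x > 0" and P: "measure M {\<omega> \<in> space M. Xf \<omega> > x} > 0"
  shows "young_fenchel \<phi> x \<le> - ln (measure M {\<omega> \<in> space M. Xf \<omega> > x})"
proof -
  interpret prob_space M by fact
  let ?P = "measure M {\<omega> \<in> space M. Xf \<omega> > x}"
  have P1: "?P \<le> 1" by simp
  show ?thesis
  proof (rule psi_le)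
    fix y
    show "x * y - \<phi> y \<le> - ln ?P"
    proof (cases "y \<le> 0")
      case True
      have "x * y \<le> 0" using True assms(5) by (simp add: mult_nonneg_nonpos)
      moreover have "ln ?P \<le> 0" using P P1 by simp
      ultimately show ?thesis using phi_nonneg[OF assms(2), of y] by linarith
    next
      case False
      then have y: "y > 0" by simp
      have int: "integrable M (\<lambda>\<omega>. exp (y * Xf \<omega>))" and bnd: "(\<integral>\<omega>. exp (y * Xf \<omega>) \<partial>M) \<le> exp (\<phi> y)"
        using assms(4) unfolding subg_bound_def by (auto dest: spec[of _ y])
      have meas: "(\<lambda>\<omega>. exp (y * Xf \<omega>)) \<in> borel_measurable M" using assms(3) by measurable
      have sub: "{\<omega> \<in> space M. Xf \<omega> > x} \<subseteq> {\<omega> \<in> space M. exp (y * Xf \<omega>) \<ge> exp (y * x)}"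
        using y by auto
      have "?P \<le> measure M {\<omega> \<in> space M. exp (y * Xf \<omega>) \<ge> exp (y * x)}"
        by (rule finite_measure_mono[OF sub]) (use meas in measurable)
      also have "\<dots> \<le> (\<integral>\<omega>. exp (y * Xf \<omega>) \<partial>M) / exp (y * x)"
        by (rule integral_Markov_inequality_measure[OF int, of "space M"]) auto
      also have "\<dots> \<le> exp (\<phi> y) / exp (y * x)"
        by (rule divide_right_mono[OF bnd]) simp
      also have "\<dots> = exp (\<phi> y - x * y)" by (simp add: exp_diff mult.commute)
      finally have "ln ?P \<le> \<phi> y - x * y" using P by (metis ln_exp ln_le_cancel_iff exp_gt_zero)
      then show ?thesis by linarith
    qed
  qed
qed

lemma B_ge_1:
  assumes "prob_space M" "orlicz_N \<phi>" "Xf \<in> borel_measurable M" "subg_bound M \<phi> Xf 1"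
    and "C > 0" "C\<^sub>1 > 0" "x\<^sub>0 > 0"
    and low: "\<And>x. x \<ge> x\<^sub>0 \<Longrightarrow> measure M {\<omega> \<in> space M. Xf \<omega> > x} \<ge> C * C\<^sub>1 * exp (- B * young_fenchel \<phi> x)"
  shows "B \<ge> 1"
proof (rule ccontr)
  assume "\<not> B \<ge> 1"
  then have B: "1 - B > 0" by simp
  let ?\<psi> = "young_fenchel \<phi>"
  have bound: "(1 - B) * ?\<psi> x \<le> - ln (C * C\<^sub>1)" if x: "x \<ge> x\<^sub>0" for x
  proof -
    let ?P = "measure M {\<omega> \<in> space M. Xf \<omega> > x}"
    let ?Q = "C * C\<^sub>1 * exp (- B * ?\<psi> x)"
    have Q: "?Q > 0" using assms by simp
    have PQ: "?Q \<le> ?P" using low[OF x] .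
    have "?\<psi> x \<le> - ln ?P"
      by (rule chernoff_psi[OF assms(1-4)]) (use x assms(7) Q PQ in auto)
    also have "ln ?Q \<le> ln ?P" using Q PQ by simp
    then have "- ln ?P \<le> - ln ?Q" by simp
    also have "ln ?Q = ln (C * C\<^sub>1) - B * ?\<psi> x" using assms(5,6) by (simp add: ln_mult)
    finally show ?thesis by (simp add: algebra_simps)
  qed
  define x where "x = max x\<^sub>0 (\<phi> 1 + 1 + \<bar>ln (C * C\<^sub>1)\<bar> / (1 - B))"
  have "x \<ge> x\<^sub>0" unfolding x_def by simp
  from bound[OF this] have b: "(1 - B) * ?\<psi> x \<le> - ln (C * C\<^sub>1)" .
  have "?\<psi> x \<ge> x - \<phi> 1" by (rule psi_unbdd[OF assms(2)])
  then have "?\<psi> x > \<bar>ln (C * C\<^sub>1)\<bar> / (1 - B)" unfolding x_def by linarith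
  then have "(1 - B) * ?\<psi> x > \<bar>ln (C * C\<^sub>1)\<bar>" using B by (simp add: field_simps)
  then show False using b by linarith
qed

theorem theorem5:
  fixes M :: "'a measure" and \<phi> p :: "real \<Rightarrow> real"
    and X :: "nat \<Rightarrow> nat \<Rightarrow> 'a \<Rightarrow> real"
    and \<kappa> :: "real \<Rightarrow> real"
    and C x\<^sub>0 B C\<^sub>1 C\<^sub>2 \<epsilon> \<alpha> :: real
  assumes "prob_space M"
    and "orlicz_N \<phi>"
    and "is_orlicz_density \<phi> p"
    and meas: "\<And>k n. k \<ge> 1 \<Longrightarrow> n \<ge> 1 \<Longrightarrow> X k n \<in> borel_measurable M"
    and indep: "prob_space.indep_vars M (\<lambda>_. borel) (\<lambda>(k, n). X k n) ({1..} \<times> {1..})"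
    and subg: "\<And>k n. k \<ge> 1 \<Longrightarrow> n \<ge> 1 \<Longrightarrow> phi_subgaussian M \<phi> (X k n)"
    and tau: "\<And>k n. k \<ge> 1 \<Longrightarrow> n \<ge> 1 \<Longrightarrow> tau_phi M \<phi> (X k n) = 1"
    and kappa_mono: "strict_mono_on {0<..} \<kappa>"
    and kappa_pos: "\<And>x. x > 0 \<Longrightarrow> \<kappa> x \<ge> 0"
    and "C > 0"
    and cond_i: "\<And>k n x. k \<ge> 1 \<Longrightarrow> n \<ge> 1 \<Longrightarrow> x > 0 \<Longrightarrow>
          measure M {\<omega> \<in> space M. X k n \<omega> > x} \<ge> C * exp (- \<kappa> x)"
    and "x\<^sub>0 > 0" and "B > 0" and "C\<^sub>1 > 0"
    and cond_ii: "\<And>x. x \<ge> x\<^sub>0 \<Longrightarrow>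
          exp (- \<kappa> x) \<ge> C\<^sub>1 * exp (- B * young_fenchel \<phi> x)"
    and "\<epsilon> > 0"
    and cond_iii: "\<And>x. x > x\<^sub>0 \<Longrightarrow> gen_inv p (x + \<epsilon>) / young_fenchel \<phi> x \<le> C\<^sub>2"
    and alpha: "\<alpha> < 2 - B * (1 + C\<^sub>2 * \<epsilon>)"
  shows "(\<Sum>m. \<Sum>j. ennreal ((real (Suc m) * real (Suc j)) powr (- \<alpha>) *
            measure M {\<omega> \<in> space M.
               max ((MAX (k, n) \<in> {1..Suc m} \<times> {1..Suc j}. X k n \<omega>)
                     - inv_pos (young_fenchel \<phi>) (ln (real (Suc m) * real (Suc j)))) 0 > \<epsilon>}))
         = \<top>"
proof -
  interpret prob_space M by fact
  let ?\<psi> = "young_fenchel \<phi>"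
  have orl: "orlicz_N \<phi>" and dens: "is_orlicz_density \<phi> p" by fact+
  have Cpos: "C > 0" and x0pos: "x\<^sub>0 > 0" and Bpos: "B > 0" and C1pos: "C\<^sub>1 > 0" and epos: "\<epsilon> > 0"
    by fact+
  have low: "measure M {\<omega> \<in> space M. X k n \<omega> > x} \<ge> C * C\<^sub>1 * exp (- B * ?\<psi> x)"
    if "k \<ge> 1" "n \<ge> 1" "x \<ge> x\<^sub>0" for k n x
  proof -
    have "C * (C\<^sub>1 * exp (- B * ?\<psi> x)) \<le> C * exp (- \<kappa> x)"
      using cond_ii[OF that(3)] Cpos by (intro mult_left_mono) auto
    also have "\<dots> \<le> measure M {\<omega> \<in> space M. X k n \<omega> > x}"
      using cond_i[OF that(1,2)] that(3) x0pos by auto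
    finally show ?thesis by (simp add: mult.assoc)
  qed
  have sg11: "phi_subgaussian M \<phi> (X 1 1)" by (rule subg) auto
  have tau11: "tau_phi M \<phi> (X 1 1) = 1" by (rule tau) auto
  have meas11: "X 1 1 \<in> borel_measurable M" by (rule meas) auto
  have B1: "B \<ge> 1"
    by (rule B_ge_1[OF assms(1) orl meas11 subg_one[OF orl sg11 tau11] Cpos C1pos x0pos])
       (rule low, auto)
  have C2nn: "C\<^sub>2 \<ge> 0"
  proof -
    have "gen_inv p (x\<^sub>0 + 1 + \<epsilon>) \<ge> 0" using gen_inv_props(1)[OF orl dens] x0pos epos by simp
    moreover have "?\<psi> (x\<^sub>0 + 1) > 0" using psi_pos[OF orl] x0pos by simp
    ultimately have "gen_inv p (x\<^sub>0 + 1 + \<epsilon>) / ?\<psi> (x\<^sub>0 + 1) \<ge> 0" by simp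
    then show ?thesis using cond_iii[of "x\<^sub>0 + 1"] by simp
  qed
  define s where "s = B * (1 + C\<^sub>2 * \<epsilon>)"
  have s1: "s \<ge> 1"
  proof -
    have "1 * 1 \<le> B * (1 + C\<^sub>2 * \<epsilon>)" using B1 C2nn epos by (intro mult_mono) auto
    then show ?thesis unfolding s_def by simp
  qed
  define c where "c = C * C\<^sub>1"
  have cpos: "c > 0" unfolding c_def using Cpos C1pos by simp
  define r where "r = 1 - s - \<alpha>"
  have r: "r > -1" using alpha unfolding r_def s_def by simp
  define K where "K = c / (1 + c)"
  have Kpos: "K > 0" unfolding K_def using cpos by simp
  define E where "E m = {\<omega> \<in> space M.
               max ((MAX (k, n) \<in> {1..Suc m} \<times> {1..Suc 0}. X k n \<omega>)
                     - inv_pos (young_fenchel \<phi>) (ln (real (Suc m) * real (Suc 0)))) 0 > \<epsilon>}" for m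

  have main: "prob (E m) \<ge> K * real (Suc m) powr (1 - s)" if mlarge: "ln (real (Suc m)) > ?\<psi> x\<^sub>0" for m
  proof -
    define N where "N = real (Suc m)"
    have N1: "N \<ge> 1" unfolding N_def by simp
    define L where "L = ln N"
    have L0: "L \<ge> 0" unfolding L_def using N1 by simp
    define u where "u = inv_pos ?\<psi> L"
    have u: "u \<ge> 0" "?\<psi> u = L" using inv_pos_props[OF orl L0] unfolding u_def by auto
    have ux0: "u > x\<^sub>0"
    proof (rule ccontr)
      assume "\<not> u > x\<^sub>0"
      then have "?\<psi> u \<le> ?\<psi> x\<^sub>0" using psi_strict[OF orl u(1), of x\<^sub>0]
        by (cases "u = x\<^sub>0") auto
      then show False using u mlarge unfolding L_def N_def by simp
    qed
    define w where "w = u + \<epsilon>"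
    have psiu: "?\<psi> u > 0" using psi_pos[OF orl] ux0 x0pos by simp
    have Y: "gen_inv p w \<le> C\<^sub>2 * ?\<psi> u"
      using cond_iii[OF ux0] psiu unfolding w_def by (simp add: pos_divide_le_eq)
    have "?\<psi> w \<le> ?\<psi> u + (w - u) * gen_inv p w"
      by (rule psi_incr[OF orl dens]) (use u epos in \<open>auto simp: w_def\<close>)
    also have "\<dots> \<le> L + \<epsilon> * (C\<^sub>2 * L)"
      using Y u epos unfolding w_def by (simp add: mult_left_mono)
    finally have "?\<psi> w \<le> (1 + C\<^sub>2 * \<epsilon>) * L" by (simp add: algebra_simps)
    then have psiw: "B * ?\<psi> w \<le> s * L" unfolding s_def using Bpos
      by (metis mult.assoc mult_left_mono less_imp_le)
    define q where "q = c * N powr (- s)"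
    have NS: "N powr (- s) = exp (- s * L)" unfolding L_def using N1 by (simp add: powr_def)
    have pk: "prob {\<omega> \<in> space M. X k 1 \<omega> > w} \<ge> q" if "k \<ge> 1" for k
    proof -
      have "q = c * exp (- s * L)" unfolding q_def NS ..
      also have "\<dots> \<le> c * exp (- B * ?\<psi> w)" using psiw cpos by (intro mult_left_mono) auto
      also have "\<dots> \<le> prob {\<omega> \<in> space M. X k 1 \<omega> > w}"
        unfolding c_def by (rule low) (use that ux0 epos in \<open>auto simp: w_def\<close>)
      finally show ?thesis .
    qed
    have q0: "q > 0" unfolding q_def using cpos N1 by simp
    have q1: "q \<le> 1" using pk[of 1] by (meson order_trans prob_le_1 order_refl le_numeral_extra(4))
    let ?F = "\<lambda>i. {(\<lambda>(k, n). X k n) i -` A \<inter> space M | A. A \<in> sets borel}"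
    have ind: "indep_sets ?F ({1..} \<times> {1..})" using indep unfolding indep_vars_def2 by auto
    define J where "J = (\<lambda>k. (k, 1::nat)) ` {1..Suc m}"
    define Ak where "Ak = (\<lambda>(k::nat, n::nat). {\<omega> \<in> space M. X k n \<omega> \<le> w})"
    have J: "J \<subseteq> {1..} \<times> {1..}" "J \<noteq> {}" "finite J" unfolding J_def by auto
    have AkF: "Ak \<in> Pi J ?F"
    proof
      fix j assume "j \<in> J"
      then obtain k where j: "j = (k, 1)" by (auto simp: J_def)
      have "Ak j = (\<lambda>(k, n). X k n) j -` {..w} \<inter> space M" unfolding j Ak_def by auto
      moreover have "{..w} \<in> sets (borel :: real measure)" by simp
      ultimately show "Ak j \<in> ?F j" by blast
    qed
    have "prob (\<Inter>j\<in>J. Ak j) = (\<Prod>j\<in>J. prob (Ak j))"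
      using ind J AkF unfolding indep_sets_def by blast
    moreover have "(\<Inter>j\<in>J. Ak j) = (\<Inter>k\<in>{1..Suc m}. {\<omega> \<in> space M. X k 1 \<omega> \<le> w})"
      unfolding J_def Ak_def by auto
    moreover have "(\<Prod>j\<in>J. prob (Ak j)) = (\<Prod>k\<in>{1..Suc m}. prob {\<omega> \<in> space M. X k 1 \<omega> \<le> w})"
      unfolding J_def by (subst prod.reindex) (auto simp: inj_on_def Ak_def)
    ultimately have prodI: "prob (\<Inter>k\<in>{1..Suc m}. {\<omega> \<in> space M. X k 1 \<omega> \<le> w})
        = (\<Prod>k\<in>{1..Suc m}. prob {\<omega> \<in> space M. X k 1 \<omega> \<le> w})" by simp
    define I where "I = (\<Inter>k\<in>{1..Suc m}. {\<omega> \<in> space M. X k 1 \<omega> \<le> w})"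
    have evk: "{\<omega> \<in> space M. X k 1 \<omega> > w} \<in> events" if "k \<ge> 1" for k
      using meas[OF that, of 1] unfolding borel_measurable_iff_greater by auto
    have each: "prob {\<omega> \<in> space M. X k 1 \<omega> \<le> w} \<le> 1 - q" if "k \<ge> 1" for k
    proof -
      have "{\<omega> \<in> space M. X k 1 \<omega> \<le> w} = space M - {\<omega> \<in> space M. X k 1 \<omega> > w}" by auto
      then have "prob {\<omega> \<in> space M. X k 1 \<omega> \<le> w} = 1 - prob {\<omega> \<in> space M. X k 1 \<omega> > w}"
        using prob_compl[OF evk[OF that]] by simp
      then show ?thesis using pk[OF that] by simp
    qed
    have "prob I \<le> (\<Prod>k\<in>{1..Suc m}. (1 - q))"
      unfolding I_def prodI by (rule prod_mono) (use each in auto)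
    also have "\<dots> = (1 - q) ^ Suc m" by simp
    also have "\<dots> \<le> exp (- q) ^ Suc m"
      by (rule power_mono) (use q1 exp_ge_add_one_self[of "-q"] in auto)
    also have "\<dots> = exp (- (q * N))" unfolding N_def
      by (metis exp_of_nat_mult mult.commute mult_minus_right of_nat_Suc)
    finally have PI: "prob I \<le> exp (- (q * N))" .
    have Ievt: "I \<in> events" unfolding I_def
      by (rule sets.finite_INT) (use meas[unfolded borel_measurable_iff_le] in auto)
    have Eeq: "E m = space M - I"
    proof -
      have fin: "finite ((\<lambda>(k, n). X k n \<omega>) ` ({1..Suc m} \<times> {1..Suc 0}))" for \<omega> by auto
      have ne: "(\<lambda>(k, n). X k n \<omega>) ` ({1..Suc m} \<times> {1..Suc 0}) \<noteq> {}" for \<omega> by auto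
      have iu: "inv_pos ?\<psi> (ln (real (Suc m) * real (Suc 0))) = u" unfolding u_def L_def N_def by simp
      have "\<epsilon> < max ((MAX (k, n) \<in> {1..Suc m} \<times> {1..Suc 0}. X k n \<omega>) - u) 0
          \<longleftrightarrow> (\<exists>k\<in>{1..Suc m}. w < X k 1 \<omega>)" for \<omega>
      proof -
        have "\<epsilon> < max ((MAX (k, n) \<in> {1..Suc m} \<times> {1..Suc 0}. X k n \<omega>) - u) 0
            \<longleftrightarrow> w < (MAX (k, n) \<in> {1..Suc m} \<times> {1..Suc 0}. X k n \<omega>)"
          using epos unfolding w_def by auto
        also have "\<dots> \<longleftrightarrow> (\<exists>a\<in>(\<lambda>(k, n). X k n \<omega>) ` ({1..Suc m} \<times> {1..Suc 0}). w < a)"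
          by (rule Max_gr_iff[OF fin ne])
        also have "\<dots> \<longleftrightarrow> (\<exists>k\<in>{1..Suc m}. w < X k 1 \<omega>)" by auto
        finally show ?thesis .
      qed
      then have E1: "E m = {\<omega> \<in> space M. \<exists>k\<in>{1..Suc m}. w < X k 1 \<omega>}"
        unfolding E_def iu by simp
      show ?thesis
      proof (intro equalityI subsetI)
        fix \<omega> assume "\<omega> \<in> E m"
        then obtain k where k: "\<omega> \<in> space M" "k \<in> {1..Suc m}" "w < X k 1 \<omega>"
          unfolding E1 by blast
        have "\<omega> \<notin> {\<omega> \<in> space M. X k 1 \<omega> \<le> w}" using k by simp
        then have "\<omega> \<notin> I" unfolding I_def using k(2) by blast
        then show "\<omega> \<in> space M - I" using k(1) by blast
      next
        fix \<omega> assume a: "\<omega> \<in> space M - I"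
        then obtain k where k: "k \<in> {1..Suc m}" "\<omega> \<notin> {\<omega> \<in> space M. X k 1 \<omega> \<le> w}"
          unfolding I_def by blast
        then have "w < X k 1 \<omega>" using a by simp
        then show "\<omega> \<in> E m" unfolding E1 using a k(1) by blast
      qed
    qed
    have "prob (E m) = 1 - prob I" unfolding Eeq by (rule prob_compl[OF Ievt])
    then have PE: "prob (E m) \<ge> 1 - exp (- (q * N))" using PI by simp
    define z where "z = q * N"
    have zdef: "z = c * N powr (1 - s)"
      unfolding z_def q_def using N1 by (simp add: powr_diff powr_minus field_simps)
    have z0: "z > 0" unfolding z_def using q0 N1 by simp
    have zc: "z \<le> c"
    proof -
      have "N powr (1 - s) \<le> N powr 0" by (rule powr_mono) (use s1 N1 in auto)
      then show ?thesis unfolding zdef using cpos N1 by (simp add: mult_left_le)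
    qed
    have "exp z \<ge> 1 + z" by simp
    then have "exp (- z) \<le> 1 / (1 + z)" using z0 by (simp add: exp_minus field_simps)
    then have "1 - exp (- z) \<ge> z / (1 + z)" using z0 by (simp add: field_simps)
    moreover have "z / (1 + z) \<ge> z / (1 + c)" using z0 zc by (intro divide_left_mono) auto
    ultimately have "prob (E m) \<ge> z / (1 + c)" using PE unfolding z_def by linarith
    then show ?thesis unfolding zdef K_def N_def by (simp add: field_simps)
  qed

  define F where "F m j = ennreal ((real (Suc m) * real (Suc j)) powr (- \<alpha>) *
            measure M {\<omega> \<in> space M.
               max ((MAX (k, n) \<in> {1..Suc m} \<times> {1..Suc j}. X k n \<omega>)
                     - inv_pos (young_fenchel \<phi>) (ln (real (Suc m) * real (Suc j)))) 0 > \<epsilon>})" for m j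
  define g where "g m = (if ln (real (Suc m)) > ?\<psi> x\<^sub>0 then K * real (Suc m) powr r else 0)" for m
  have g0: "g m \<ge> 0" for m unfolding g_def using Kpos by simp
  have ge: "ennreal (g m) \<le> (\<Sum>j. F m j)" for m
  proof -
    have F0: "F m 0 = ennreal (real (Suc m) powr (- \<alpha>) * prob (E m))"
      unfolding F_def E_def by simp
    have "g m \<le> real (Suc m) powr (- \<alpha>) * prob (E m)"
    proof (cases "ln (real (Suc m)) > ?\<psi> x\<^sub>0")
      case True
      have "g m = real (Suc m) powr (- \<alpha>) * (K * real (Suc m) powr (1 - s))"
        unfolding g_def r_def using True by (simp add: powr_add[symmetric] algebra_simps)
      also have "\<dots> \<le> real (Suc m) powr (- \<alpha>) * prob (E m)"
        using main[OF True] by (intro mult_left_mono) auto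
      finally show ?thesis .
    qed (simp add: g_def)
    then have "ennreal (g m) \<le> F m 0" unfolding F0 by (rule ennreal_leI)
    also have "F m 0 \<le> (\<Sum>j. F m j)"
      using sum_le_suminf[OF summableI, of "{0}" "F m"] by simp
    finally show ?thesis .
  qed
  have top: "(\<Sum>m. ennreal (g m)) = \<top>"
  proof (rule ccontr)
    assume nt: "(\<Sum>m. ennreal (g m)) \<noteq> \<top>"
    have sg: "summable g" by (rule summable_suminf_not_top[OF g0 nt])
    define M0 where "M0 = nat \<lceil>exp (?\<psi> x\<^sub>0)\<rceil>"
    have M0: "exp (?\<psi> x\<^sub>0) \<le> real M0" unfolding M0_def by (rule real_nat_ceiling_ge)
    have ev: "eventually (\<lambda>m. g m = K * real (Suc m) powr r) sequentially"
      unfolding eventually_sequentially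
    proof (intro exI[of _ M0] allI impI)
      fix m assume "M0 \<le> m"
      then have "real M0 \<le> real m" by simp
      then have lt: "exp (?\<psi> x\<^sub>0) < real (Suc m)" using M0 by simp
      have "ln (exp (?\<psi> x\<^sub>0)) < ln (real (Suc m))"
        using lt by (subst ln_less_cancel_iff) auto
      then have "ln (real (Suc m)) > ?\<psi> x\<^sub>0" by simp
      then show "g m = K * real (Suc m) powr r" unfolding g_def by simp
    qed
    have "summable g = summable (\<lambda>m. K * real (Suc m) powr r)" by (rule summable_cong[OF ev])
    then have "summable (\<lambda>m. K * real (Suc m) powr r)" using sg by simp
    then have "summable (\<lambda>m. real (Suc m) powr r)" using Kpos by simp
    then have "summable (\<lambda>m. real m powr r)"
      using summable_Suc_iff[of "\<lambda>m. real m powr r"] by simp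
    then show False using summable_real_powr_iff[of r] r by simp
  qed
  have "(\<Sum>m. ennreal (g m)) \<le> (\<Sum>m. \<Sum>j. F m j)"
    by (rule suminf_le[OF ge summableI summableI])
  then have "(\<Sum>m. \<Sum>j. F m j) = \<top>" using top by (simp add: top_unique)
  then show ?thesis unfolding F_def .
qed

end
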